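(* Let $S=\{132,231,321\}$, and let $t_n$ and $f_n$ be the numbers of rooted labeled trees and forests on $[n]$ avoiding $S$, with exponential generating functions $T(x)=\sum_{n\ge0}\frac{t_n}{n!}x^n$ and $F(x)=\sum_{n\ge0}\frac{f_n}{n!}x^n$. Then $t_n=n!$ for all $n\ge1$, $T(x)=\frac{x}{1-x}$, $F(x)=e^{x/(1-x)}$, and $\lim_{n\to\infty}\frac{f_n^{1/n}}{n}=e^{-1}$.
   Context: A rooted labeled forest on $[n]$ is an unordered forest on $n$ vertices, each component with a distinguished root, with distinct labels from $[n]$; a rooted labeled tree is a connected one. An instance of a pattern (permutation) $\pi$ of $[k]$ is a sequence of vertices $v_1,\dots,v_k$ with $v_i$ a strict ancestor of $v_{i+1}$ whose labels are in the same relative order as $\pi$; a forest avoids $S$ if it contains no instance of any pattern in $S$. *)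

theory Defs
  imports Complex_Main "HOL-Computational_Algebra.Formal_Power_Series"
begin

text \<open>A rooted labeled forest on [n] = {1..n} is encoded by its parent function
  p :: nat => nat: for a vertex v in {1..n}, p v = 0 means v is a root, otherwise
  p v in {1..n} is the parent of v.\<close>

definition parent_edges :: "nat \<Rightarrow> (nat \<Rightarrow> nat) \<Rightarrow> (nat \<times> nat) set" where
  "parent_edges n p = {(v, p v) | v. v \<in> {1..n} \<and> p v \<noteq> 0}"

definition rooted_forest :: "nat \<Rightarrow> (nat \<Rightarrow> nat) \<Rightarrow> bool" where
  "rooted_forest n p \<longleftrightarrow>
     (\<forall>v. v \<notin> {1..n} \<longrightarrow> p v = 0) \<and>
     (\<forall>v\<in>{1..n}. p v \<le> n) \<and>
     (\<forall>v\<in>{1..n}. (v, v) \<notin> (parent_edges n p)\<^sup>+)"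

definition roots :: "nat \<Rightarrow> (nat \<Rightarrow> nat) \<Rightarrow> nat set" where
  "roots n p = {v \<in> {1..n}. p v = 0}"

definition rooted_tree :: "nat \<Rightarrow> (nat \<Rightarrow> nat) \<Rightarrow> bool" where
  "rooted_tree n p \<longleftrightarrow> rooted_forest n p \<and> card (roots n p) = 1"

definition strict_anc :: "nat \<Rightarrow> (nat \<Rightarrow> nat) \<Rightarrow> nat \<Rightarrow> nat \<Rightarrow> bool" where
  "strict_anc n p a v \<longleftrightarrow> (v, a) \<in> (parent_edges n p)\<^sup>+"

text \<open>Patterns are permutations in one-line notation, as lists.\<close>
definition has_instance :: "nat \<Rightarrow> (nat \<Rightarrow> nat) \<Rightarrow> nat list \<Rightarrow> bool" where
  "has_instance n p pat \<longleftrightarrow>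
     (\<exists>vs. length vs = length pat \<and> set vs \<subseteq> {1..n} \<and>
        (\<forall>i. Suc i < length vs \<longrightarrow> strict_anc n p (vs ! i) (vs ! Suc i)) \<and>
        (\<forall>i<length vs. \<forall>j<length vs. vs ! i < vs ! j \<longleftrightarrow> pat ! i < pat ! j))"

definition avoids :: "nat \<Rightarrow> (nat \<Rightarrow> nat) \<Rightarrow> nat list set \<Rightarrow> bool" where
  "avoids n p S \<longleftrightarrow> (\<forall>pat\<in>S. \<not> has_instance n p pat)"

definition num_trees :: "nat list set \<Rightarrow> nat \<Rightarrow> nat" where
  "num_trees S n = card {p. rooted_tree n p \<and> avoids n p S}"

definition num_forests :: "nat list set \<Rightarrow> nat \<Rightarrow> nat" where
  "num_forests S n = card {p. rooted_forest n p \<and> avoids n p S}"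

end

theory Submission
  imports Defs "HOL-Library.FuncSet" "HOL-Real_Asymp.Real_Asymp"
begin

definition XR :: "nat \<Rightarrow> nat set \<Rightarrow> (nat \<Rightarrow> nat) set" where
  "XR n R = {p. (\<forall>v. v \<notin> {1..n} \<longrightarrow> p v = 0) \<and> (\<forall>v\<in>R. p v = 0) \<and>
      (\<forall>v\<in>{1..n}-R. p v \<in> R \<union> {u\<in>{1..n}-R. u < v})}"

lemma XR_out: "p \<in> XR n R \<Longrightarrow> v \<notin> {1..n} \<Longrightarrow> p v = 0"
  unfolding XR_def by blast
lemma XR_R: "p \<in> XR n R \<Longrightarrow> v \<in> R \<Longrightarrow> p v = 0"
  unfolding XR_def by blast
lemma XR_N: "p \<in> XR n R \<Longrightarrow> v \<in> {1..n} \<Longrightarrow> v \<notin> R \<Longrightarrow> p v \<in> R \<union> {u\<in>{1..n}-R. u < v}"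
  unfolding XR_def by blast

lemma trancl_decr:
  assumes "\<forall>(a,b)\<in>E. \<mu> b < (\<mu> a::nat)" "(x,y) \<in> E\<^sup>+"
  shows "\<mu> y < \<mu> x"
  using assms(2)
proof (induction rule: trancl_induct)
  case (base y) then show ?case using assms(1) by auto
next
  case (step y z) then show ?case using assms(1) by fastforce
qed

lemma pe_iff: "(a,b) \<in> parent_edges n p \<longleftrightarrow> a \<in> {1..n} \<and> p a \<noteq> 0 \<and> b = p a"
  unfolding parent_edges_def by auto

lemma trancl_first:
  assumes "(a,b) \<in> (parent_edges n p)\<^sup>+"
  shows "a \<in> {1..n} \<and> p a \<noteq> 0"
  using tranclD[OF assms] pe_iff by blast

lemma XR_anc_less:
  assumes "p \<in> XR n R" "(c,b) \<in> (parent_edges n p)\<^sup>+" "b \<notin> R"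
  shows "b < c"
  using assms(2,3)
proof (induction rule: trancl_induct)
  case (base y)
  then have c: "c \<in> {1..n}" "p c \<noteq> 0" "y = p c" by (auto simp: pe_iff)
  then have "c \<notin> R" using XR_R[OF assms(1), of c] by auto
  then have "p c \<in> R \<union> {u\<in>{1..n}-R. u < c}" using XR_N[OF assms(1) c(1)] by blast
  then show ?case using c(3) base(2) by blast
next
  case (step x y)
  then have x: "x \<in> {1..n}" "p x \<noteq> 0" "y = p x" by (auto simp: pe_iff)
  then have xR: "x \<notin> R" using XR_R[OF assms(1), of x] by auto
  then have "x < c" using step by blast
  moreover have "p x \<in> R \<union> {u\<in>{1..n}-R. u < x}" using XR_N[OF assms(1) x(1) xR] by blast
  then have "y < x" using x(3) step(4) by blast
  ultimately show ?case by simp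
qed

lemma XR_N_pos:
  assumes "R \<subseteq> {1..n}" "p \<in> XR n R" "v \<in> {1..n}" "v \<notin> R"
  shows "p v \<in> {1..n}"
proof -
  have "p v \<in> R \<union> {u\<in>{1..n}-R. u < v}" using XR_N[OF assms(2-4)] .
  then show ?thesis using assms(1) by blast
qed

lemma XR_forest:
  assumes "R \<subseteq> {1..n}" "p \<in> XR n R"
  shows "rooted_forest n p"
proof -
  define \<mu> where "\<mu> v = (if v \<in> R then 0 else Suc v)" for v
  have dec: "\<forall>(a,b)\<in>parent_edges n p. \<mu> b < \<mu> a"
  proof safe
    fix a b assume "(a,b) \<in> parent_edges n p"
    then have ab: "a \<in> {1..n}" "p a \<noteq> 0" "b = p a" by (auto simp: pe_iff)
    then have aR: "a \<notin> R" using XR_R[OF assms(2), of a] by auto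
    have "p a \<in> R \<union> {u\<in>{1..n}-R. u < a}" using XR_N[OF assms(2) ab(1) aR] .
    then show "\<mu> b < \<mu> a" using aR ab(3) unfolding \<mu>_def by auto
  qed
  have "p v \<le> n" if "v \<in> {1..n}" for v
  proof (cases "v \<in> R")
    case True then show ?thesis using XR_R[OF assms(2)] by simp
  next
    case False then show ?thesis using XR_N_pos[OF assms that] by simp
  qed
  moreover have "\<forall>v\<in>{1..n}. (v,v) \<notin> (parent_edges n p)\<^sup>+"
    using trancl_decr[OF dec] by blast
  moreover have "\<forall>v. v \<notin> {1..n} \<longrightarrow> p v = 0" using XR_out[OF assms(2)] by blast
  ultimately show ?thesis unfolding rooted_forest_def by blast
qed

lemma XR_roots:
  assumes "R \<subseteq> {1..n}" "p \<in> XR n R"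
  shows "roots n p = R"
proof -
  have "p v \<noteq> 0" if "v \<in> {1..n}" "v \<notin> R" for v using XR_N_pos[OF assms that] by simp
  moreover have "p v = 0" if "v \<in> R" for v using XR_R[OF assms(2) that] .
  ultimately show ?thesis using assms(1) unfolding roots_def by blast
qed

lemma XR_avoids:
  assumes "p \<in> XR n R" "pat \<in> {[1,3,2], [2,3,1], [3,2,1]}"
  shows "\<not> has_instance n p pat"
proof
  assume "has_instance n p pat"
  then obtain vs where vs: "length vs = length pat"
    "\<forall>i. Suc i < length vs \<longrightarrow> strict_anc n p (vs ! i) (vs ! Suc i)"
    "\<forall>i<length vs. \<forall>j<length vs. vs ! i < vs ! j \<longleftrightarrow> pat ! i < pat ! j"
    unfolding has_instance_def by blast
  have l: "length vs = 3" using vs(1) assms(2) by auto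
  have "(vs!1, vs!0) \<in> (parent_edges n p)\<^sup>+" using vs(2)[rule_format, of 0] l
    unfolding strict_anc_def by auto
  then have "p (vs!1) \<noteq> 0" using trancl_first by blast
  then have nr: "vs!1 \<notin> R" using XR_R[OF assms(1), of "vs!1"] by auto
  have "(vs!2, vs!1) \<in> (parent_edges n p)\<^sup>+" using vs(2)[rule_format, of 1] l
    unfolding strict_anc_def by (auto simp: numeral_2_eq_2)
  then have "vs!1 < vs!2" using XR_anc_less[OF assms(1) _ nr] by blast
  then have "pat!1 < pat!2" using vs(3) l by auto
  then show False using assms(2) by auto
qed


lemma inst3:
  assumes "a \<in> {1..n}" "b \<in> {1..n}" "c \<in> {1..n}"
    "(b,a) \<in> (parent_edges n p)\<^sup>+" "(c,b) \<in> (parent_edges n p)\<^sup>+"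
    "a<b \<longleftrightarrow> x<y" "a<c \<longleftrightarrow> x<z" "b<c \<longleftrightarrow> y<z"
    "b<a \<longleftrightarrow> y<x" "c<a \<longleftrightarrow> z<x" "c<b \<longleftrightarrow> z<y"
  shows "has_instance n p [x,y,z]"
  unfolding has_instance_def
proof (intro exI[of _ "[a,b,c]"] conjI allI impI)
  show "length [a,b,c] = length [x,y,z]" by simp
  show "set [a,b,c] \<subseteq> {1..n}" using assms(1-3) by simp
  fix i assume "Suc i < length [a,b,c]"
  then have "i = 0 \<or> i = 1" by auto
  then show "strict_anc n p ([a,b,c] ! i) ([a,b,c] ! Suc i)"
    using assms(4,5) unfolding strict_anc_def by auto
next
  fix i j assume "i < length [a,b,c]" "j < length [a,b,c]"
  then have "i = 0 \<or> i = 1 \<or> i = 2" "j = 0 \<or> j = 1 \<or> j = 2" by auto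
  then show "[a,b,c] ! i < [a,b,c] ! j \<longleftrightarrow> [x,y,z] ! i < [x,y,z] ! j"
    using assms(6-11) by (elim disjE) auto
qed

lemma forest_XR:
  assumes "rooted_forest n p" "avoids n p {[1,3,2], [2,3,1], [3,2,1]}"
  shows "p \<in> XR n (roots n p)"
proof -
  let ?R = "roots n p"
  let ?E = "parent_edges n p"
  have out: "\<forall>v. v \<notin> {1..n} \<longrightarrow> p v = 0" and le: "\<forall>v\<in>{1..n}. p v \<le> n"
    and acyc: "\<forall>v\<in>{1..n}. (v,v) \<notin> ?E\<^sup>+"
    using assms(1) unfolding rooted_forest_def by blast+
  have R0: "\<forall>v\<in>?R. p v = 0" unfolding roots_def by blast
  have N: "p v \<in> ?R \<union> {u\<in>{1..n}-?R. u < v}" if v: "v \<in> {1..n}" "v \<notin> ?R" for v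
  proof (cases "p v \<in> ?R")
    case True then show ?thesis by blast
  next
    case False
    define b where "b = p v"
    have "p v \<noteq> 0" using v unfolding roots_def by simp
    then have b: "b \<in> {1..n}" "b \<noteq> 0" using le v unfolding b_def by auto
    have bR: "b \<notin> ?R" using False b_def by simp
    define a where "a = p b"
    have "a \<noteq> 0" using b bR unfolding roots_def a_def by simp
    then have a: "a \<in> {1..n}" using le b unfolding a_def by auto
    have e1: "(v,b) \<in> ?E" using v b unfolding b_def pe_iff by auto
    have e2: "(b,a) \<in> ?E" using a b \<open>a \<noteq> 0\<close> unfolding a_def pe_iff by auto
    have t1: "(v,b) \<in> ?E\<^sup>+" "(b,a) \<in> ?E\<^sup>+" using e1 e2 by auto
    have t2: "(v,a) \<in> ?E\<^sup>+" using e1 e2 by (meson trancl.simps)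
    have "b \<noteq> v" using acyc t1 v by auto
    have "a \<noteq> b" using acyc t1 b by auto
    have "a \<noteq> v" using acyc t2 v by auto
    have "b < v"
    proof (rule ccontr)
      assume "\<not> b < v"
      then have "v < b" using \<open>b \<noteq> v\<close> by simp
      have "\<exists>pat\<in>{[1,3,2], [2,3,1], [3,2,1]}. has_instance n p pat"
      proof (cases "a < v")
        case True
        then have "has_instance n p [1,3,2]"
          using inst3[OF a b(1) v(1) t1(2) t1(1)] \<open>v < b\<close> by auto
        then show ?thesis by blast
      next
        case False
        then have "v < a" using \<open>a \<noteq> v\<close> by simp
        show ?thesis
        proof (cases "a < b")
          case True
          then have "has_instance n p [2,3,1]"
            using inst3[OF a b(1) v(1) t1(2) t1(1)] \<open>v < b\<close> \<open>v < a\<close> by auto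
          then show ?thesis by blast
        next
          case False
          then have "b < a" using \<open>a \<noteq> b\<close> by simp
          then have "has_instance n p [3,2,1]"
            using inst3[OF a b(1) v(1) t1(2) t1(1)] \<open>v < b\<close> \<open>v < a\<close> by auto
          then show ?thesis by blast
        qed
      qed
      then show False using assms(2) unfolding avoids_def by blast
    qed
    then show ?thesis using b bR unfolding b_def by blast
  qed
  show ?thesis unfolding XR_def using out R0 N by blast
qed

lemma roots_sub: "roots n p \<subseteq> {1..n}" unfolding roots_def by blast

lemma good_set:
  assumes "Q \<subseteq> Pow {1..n}"
  shows "{p. rooted_forest n p \<and> avoids n p {[1,3,2], [2,3,1], [3,2,1]} \<and> roots n p \<in> Q}
     = (\<Union>R\<in>Q. XR n R)"
proof safe
  fix p assume "rooted_forest n p" "avoids n p {[1,3,2], [2,3,1], [3,2,1]}" "roots n p \<in> Q"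
  then show "p \<in> (\<Union>R\<in>Q. XR n R)" using forest_XR by blast
next
  fix p R assume "R \<in> Q" "p \<in> XR n R"
  then have R: "R \<subseteq> {1..n}" using assms by blast
  show "rooted_forest n p" using XR_forest[OF R \<open>p \<in> XR n R\<close>] .
  show "avoids n p {[1,3,2], [2,3,1], [3,2,1]}" unfolding avoids_def
    using XR_avoids[OF \<open>p \<in> XR n R\<close>] by blast
  show "roots n p \<in> Q" using XR_roots[OF R \<open>p \<in> XR n R\<close>] \<open>R \<in> Q\<close> by simp
qed

lemma prod_poch:
  fixes N :: "nat set"
  assumes "finite N"
  shows "(\<Prod>v\<in>N. (k::nat) + card {u\<in>N. u < v}) = pochhammer k (card N)"
  using assms
proof (induction N rule: finite_linorder_max_induct)
  case empty then show ?case by simp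
next
  case (insert b A)
  have bA: "b \<notin> A" using insert(2) by blast
  have "(\<Prod>v\<in>insert b A. k + card {u\<in>insert b A. u < v})
      = (k + card {u\<in>insert b A. u < b}) * (\<Prod>v\<in>A. k + card {u\<in>insert b A. u < v})"
    using insert(1) bA by simp
  also have "{u\<in>insert b A. u < b} = A" using insert(2) by auto
  also have "(\<Prod>v\<in>A. k + card {u\<in>insert b A. u < v}) = (\<Prod>v\<in>A. k + card {u\<in>A. u < v})"
  proof (rule prod.cong)
    fix v assume "v \<in> A"
    then have "{u\<in>insert b A. u < v} = {u\<in>A. u < v}" using insert(2) by auto
    then show "k + card {u\<in>insert b A. u < v} = k + card {u\<in>A. u < v}" by simp
  qed simp
  also have "\<dots> = pochhammer k (card A)" using insert(3) .
  finally show ?case using insert(1) bA by (simp add: pochhammer_Suc)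
qed

definition ext0 :: "nat \<Rightarrow> (nat \<Rightarrow> nat) \<Rightarrow> nat \<Rightarrow> nat" where
  "ext0 n f = (\<lambda>v. if v \<in> {1..n} then f v else 0)"

lemma card_XR:
  assumes "R \<subseteq> {1..n}"
  shows "card (XR n R) = pochhammer (card R) (n - card R)" "finite (XR n R)"
proof -
  define A where "A v = (if v \<in> R then {0} else R \<union> {u\<in>{1..n}-R. u < v})" for v
  have bij: "bij_betw (\<lambda>p. restrict p {1..n}) (XR n R) (PiE {1..n} A)"
  proof (rule bij_betwI[where g = "ext0 n"])
    show "(\<lambda>p. restrict p {1..n}) \<in> XR n R \<rightarrow> PiE {1..n} A"
    proof
      fix p assume p: "p \<in> XR n R"
      show "restrict p {1..n} \<in> PiE {1..n} A"
      proof (rule PiE_I)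
        fix v assume v: "v \<in> {1..n}"
        show "restrict p {1..n} v \<in> A v"
        proof (cases "v \<in> R")
          case True then show ?thesis using XR_R[OF p True] v unfolding A_def by simp
        next
          case False then show ?thesis using XR_N[OF p v False] v unfolding A_def by simp
        qed
      qed (auto simp: restrict_def)
    qed
    show "ext0 n \<in> PiE {1..n} A \<rightarrow> XR n R"
    proof
      fix f assume f: "f \<in> PiE {1..n} A"
      have fA: "f v \<in> A v" if "v \<in> {1..n}" for v using f that by blast
      show "ext0 n f \<in> XR n R" unfolding XR_def mem_Collect_eq
      proof (intro conjI ballI allI impI)
        fix v assume "v \<notin> {1..n}" then show "ext0 n f v = 0" by (auto simp: ext0_def)
      next
        fix v assume v: "v \<in> R"
        then have "v \<in> {1..n}" using assms by blast
        then have "f v \<in> A v" using fA by blast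
        then show "ext0 n f v = 0" using v \<open>v \<in> {1..n}\<close> by (simp add: ext0_def A_def)
      next
        fix v assume v: "v \<in> {1..n} - R"
        then have "f v \<in> A v" using fA by blast
        then show "ext0 n f v \<in> R \<union> {u\<in>{1..n}-R. u < v}" using v by (simp add: ext0_def A_def)
      qed
    qed
    show "ext0 n (restrict p {1..n}) = p" if "p \<in> XR n R" for p
      using XR_out[OF that] unfolding ext0_def by (auto simp: fun_eq_iff)
    show "restrict (ext0 n f) {1..n} = f" if "f \<in> PiE {1..n} A" for f
      using that PiE_arb[OF that] unfolding ext0_def by (auto simp: fun_eq_iff)
  qed
  have fR: "finite R" using assms finite_subset by blast
  have fin: "finite (PiE {1..n} A)"
    by (rule finite_PiE) (auto simp: A_def fR)
  then show "finite (XR n R)" using bij bij_betw_finite by blast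
  have "card (XR n R) = card (PiE {1..n} A)" using bij bij_betw_same_card by blast
  also have "\<dots> = (\<Prod>v\<in>{1..n}. card (A v))" by (simp add: card_PiE)
  also have "\<dots> = (\<Prod>v\<in>{1..n}-R. card (A v))"
    by (rule prod.mono_neutral_right) (auto simp: A_def)
  also have "\<dots> = (\<Prod>v\<in>{1..n}-R. card R + card {u\<in>{1..n}-R. u < v})"
  proof (rule prod.cong)
    fix v assume v: "v \<in> {1..n}-R"
    have "finite R" using assms finite_subset by blast
    then have "card (R \<union> {u\<in>{1..n}-R. u < v}) = card R + card {u\<in>{1..n}-R. u < v}"
      by (intro card_Un_disjoint) auto
    then show "card (A v) = card R + card {u\<in>{1..n}-R. u < v}" using v unfolding A_def by simp
  qed simp
  also have "\<dots> = pochhammer (card R) (card ({1..n}-R))" by (rule prod_poch) simp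
  also have "card ({1..n}-R) = n - card R"
    using assms by (simp add: card_Diff_subset finite_subset)
  finally show "card (XR n R) = pochhammer (card R) (n - card R)" .
qed

lemma count_Q:
  assumes "Q \<subseteq> Pow {1..n}"
  shows "card {p. rooted_forest n p \<and> avoids n p {[1,3,2], [2,3,1], [3,2,1]} \<and> roots n p \<in> Q}
     = (\<Sum>R\<in>Q. pochhammer (card R) (n - card R))"
proof -
  have fQ: "finite Q" using assms finite_subset by blast
  have "card (\<Union>R\<in>Q. XR n R) = (\<Sum>R\<in>Q. card (XR n R))"
  proof (rule card_UN_disjoint[OF fQ])
    show "\<forall>R\<in>Q. finite (XR n R)" using card_XR(2) assms by blast
    show "\<forall>i\<in>Q. \<forall>j\<in>Q. i \<noteq> j \<longrightarrow> XR n i \<inter> XR n j = {}"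
    proof (intro ballI impI)
      fix i j assume ij: "i \<in> Q" "j \<in> Q" "i \<noteq> j"
      have i: "i \<subseteq> {1..n}" using assms ij(1) by blast
      have j: "j \<subseteq> {1..n}" using assms ij(2) by blast
      have "p \<notin> XR n j" if p: "p \<in> XR n i" for p
      proof
        assume "p \<in> XR n j"
        then have "roots n p = j" using XR_roots[OF j] by simp
        moreover have "roots n p = i" using XR_roots[OF i p] .
        ultimately show False using ij(3) by simp
      qed
      then show "XR n i \<inter> XR n j = {}" by blast
    qed
  qed
  also have "\<dots> = (\<Sum>R\<in>Q. pochhammer (card R) (n - card R))"
    using card_XR(1) assms by (intro sum.cong) auto
  finally show ?thesis using good_set[OF assms] by simp
qed

lemma num_forests_eq:
  "num_forests {[1,3,2], [2,3,1], [3,2,1]} n = (\<Sum>k=0..n. (n choose k) * pochhammer k (n - k))"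
proof -
  have "num_forests {[1,3,2], [2,3,1], [3,2,1]} n
     = card {p. rooted_forest n p \<and> avoids n p {[1,3,2], [2,3,1], [3,2,1]} \<and> roots n p \<in> Pow {1..n}}"
    unfolding num_forests_def using roots_sub by auto
  also have "\<dots> = (\<Sum>R\<in>Pow {1..n}. pochhammer (card R) (n - card R))" by (rule count_Q) simp
  also have "\<dots> = (\<Sum>k=0..n. \<Sum>R\<in>{R. R \<in> Pow {1..n} \<and> card R = k}. pochhammer (card R) (n - card R))"
    by (rule sum.group[symmetric]) (auto simp: card_mono[of "{1..n}", simplified])
  also have "\<dots> = (\<Sum>k=0..n. (n choose k) * pochhammer k (n - k))"
  proof (rule sum.cong)
    fix k
    have "(\<Sum>R\<in>{R. R \<in> Pow {1..n} \<and> card R = k}. pochhammer (card R) (n - card R))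
        = (\<Sum>R\<in>{R. R \<subseteq> {1..n} \<and> card R = k}. pochhammer k (n - k))" by (intro sum.cong) auto
    also have "\<dots> = (n choose k) * pochhammer k (n - k)" using n_subsets[of "{1..n}" k] by simp
    finally show "(\<Sum>R\<in>{R. R \<in> Pow {1..n} \<and> card R = k}. pochhammer (card R) (n - card R))
        = (n choose k) * pochhammer k (n - k)" .
  qed simp
  finally show ?thesis .
qed

lemma num_trees_eq:
  "num_trees {[1,3,2], [2,3,1], [3,2,1]} n = (if n = 0 then 0 else fact n)"
proof -
  have "num_trees {[1,3,2], [2,3,1], [3,2,1]} n
     = card {p. rooted_forest n p \<and> avoids n p {[1,3,2], [2,3,1], [3,2,1]} \<and> roots n p \<in> {R. R \<subseteq> {1..n} \<and> card R = 1}}"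
  proof -
    have "{p. rooted_tree n p \<and> avoids n p {[1,3,2], [2,3,1], [3,2,1]}}
       = {p. rooted_forest n p \<and> avoids n p {[1,3,2], [2,3,1], [3,2,1]} \<and> roots n p \<in> {R. R \<subseteq> {1..n} \<and> card R = 1}}"
      using roots_sub unfolding rooted_tree_def by auto
    then show ?thesis unfolding num_trees_def by simp
  qed
  also have "\<dots> = (\<Sum>R\<in>{R. R \<subseteq> {1..n} \<and> card R = 1}. pochhammer (card R) (n - card R))"
    by (rule count_Q) auto
  also have "\<dots> = (\<Sum>R\<in>{R. R \<subseteq> {1..n} \<and> card R = 1}. pochhammer 1 (n - 1))"
    by (intro sum.cong) auto
  also have "\<dots> = n * fact (n - 1)" using n_subsets[of "{1..n}" 1] by (simp add: pochhammer_fact)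
  also have "\<dots> = (if n = 0 then 0 else fact n)"
    by (cases n) auto
  finally show ?thesis .
qed


unbundle fps_syntax

lemma aux_frac:
  fixes F x P k :: real
  assumes "F > 0" "x \<ge> 0"
  shows "P / F + k * P / ((x + 1) * F) = P * ((x + 1) + k) / ((x + 1) * F)"
proof -
  have x1: "x + 1 \<noteq> 0" using assms by simp
  have "P / F = P * (x + 1) / ((x + 1) * F)" using x1 by simp
  then have "P / F + k * P / ((x + 1) * F) = (P * (x + 1) + k * P) / ((x + 1) * F)"
    by (simp add: add_divide_distrib)
  also have "P * (x + 1) + k * P = P * ((x + 1) + k)" by (simp add: algebra_simps)
  finally show ?thesis .
qed

lemma poch_hockey:
  "(\<Sum>j=0..m. pochhammer (real k) j / fact j) = pochhammer (real (Suc k)) m / fact m"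
proof (induction m)
  case 0 then show ?case by simp
next
  case (Suc m)
  have "(\<Sum>j=0..Suc m. pochhammer (real k) j / fact j)
      = pochhammer (real (Suc k)) m / fact m + pochhammer (real k) (Suc m) / fact (Suc m)"
    using Suc by simp
  also have "pochhammer (real k) (Suc m) = real k * pochhammer (real (Suc k)) m"
    by (simp add: pochhammer_rec add.commute)
  also have "pochhammer (real (Suc k)) m / fact m + real k * pochhammer (real (Suc k)) m / fact (Suc m)
      = pochhammer (real (Suc k)) m * (real (Suc m) + real k) / fact (Suc m)"
    using aux_frac[of "fact m" "real m" "pochhammer (real (Suc k)) m" "real k"]
    by (simp add: fact_Suc algebra_simps)
  also have "\<dots> = pochhammer (real (Suc k)) (Suc m) / fact (Suc m)"
    by (simp add: pochhammer_Suc algebra_simps)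
  finally show ?case .
qed

definition G1 :: "real fps" where "G1 = Abs_fps (\<lambda>_. 1)"

lemma G1_pow_nth: "(G1 ^ k) $ m = pochhammer (real k) m / fact m"
proof (induction k arbitrary: m)
  case 0 then show ?case by (simp add: pochhammer_0_left)
next
  case (Suc k)
  have "(G1 ^ Suc k) $ m = (G1 * G1 ^ k) $ m" by simp
  also have "\<dots> = (\<Sum>i=0..m. G1 ^ k $ (m - i))" by (simp add: fps_mult_nth G1_def)
  also have "\<dots> = (\<Sum>j=0..m. G1 ^ k $ j)"
    by (rule sum.reindex_bij_witness[where i="\<lambda>j. m - j" and j="\<lambda>j. m - j"]) auto
  also have "\<dots> = pochhammer (real (Suc k)) m / fact m" using Suc poch_hockey by simp
  finally show ?case .
qed

lemma T_eq: "fps_X / (1 - fps_X) = fps_X * G1"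
proof -
  have "inverse (1 - fps_X :: real fps) = G1"
    using fps_inverse_gp'[where 'a=real] fps_inverse_idempotent[of G1]
    by (simp add: G1_def)
  then show ?thesis by (simp add: fps_divide_unit)
qed

lemma T_pow_nth: "((fps_X / (1 - fps_X)) ^ k) $ n
   = (if n < k then 0 else pochhammer (real k) (n - k) / fact (n - k))"
  by (simp add: T_eq power_mult_distrib fps_X_power_mult_nth G1_pow_nth)

lemma fps_trees: "Abs_fps (\<lambda>n. (if n = 0 then 0 else 1)) = fps_X / (1 - fps_X :: real fps)"
  by (simp add: T_eq fps_eq_iff G1_def)

lemma fps_forests:
  "Abs_fps (\<lambda>n. real (\<Sum>k=0..n. (n choose k) * pochhammer k (n - k)) / fact n)
     = fps_compose (fps_exp 1) (fps_X / (1 - fps_X))"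
proof (rule fps_ext)
  fix n
  have "real (\<Sum>k=0..n. (n choose k) * pochhammer k (n - k)) / fact n
      = (\<Sum>k=0..n. pochhammer (real k) (n - k) / (fact k * fact (n - k)))"
  proof -
    have "real (\<Sum>k=0..n. (n choose k) * pochhammer k (n - k)) / fact n
        = (\<Sum>k=0..n. real (n choose k) * pochhammer (real k) (n - k) / fact n)"
      by (simp add: sum_divide_distrib pochhammer_of_nat)
    also have "\<dots> = (\<Sum>k=0..n. pochhammer (real k) (n - k) / (fact k * fact (n - k)))"
      by (intro sum.cong refl) (simp add: binomial_fact)
    finally show ?thesis .
  qed
  also have "\<dots> = (fps_compose (fps_exp 1) (fps_X / (1 - fps_X))) $ n"
    by (simp add: fps_compose_nth T_pow_nth)
  finally show "Abs_fps (\<lambda>n. real (\<Sum>k=0..n. (n choose k) * pochhammer k (n - k)) / fact n) $ n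
     = (fps_compose (fps_exp 1) (fps_X / (1 - fps_X))) $ n" by simp
qed


definition fF :: "nat \<Rightarrow> nat" where
  "fF n = (\<Sum>k=0..n. (n choose k) * pochhammer k (n - k))"

lemma exp_term:
  fixes x :: real
  assumes "x \<ge> 0"
  shows "x ^ k / fact k \<le> exp x"
proof -
  have s: "(\<lambda>n. x ^ n / fact n) sums exp x"
    using exp_converges[of x] by (simp add: divide_inverse mult.commute)
  have "sum (\<lambda>n. x ^ n / fact n) {k} \<le> suminf (\<lambda>n. x ^ n / fact n)"
    by (rule sum_le_suminf) (use s assms in \<open>auto simp: sums_iff\<close>)
  then show ?thesis using s by (simp add: sums_iff)
qed

lemma fact_lower: "(real n / exp 1) ^ n \<le> fact n"
proof -
  have "real n ^ n / fact n \<le> exp (real n)" by (rule exp_term) simp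
  also have "exp (real n) = exp 1 ^ n" using exp_of_nat_mult[of n 1] by simp
  finally have "real n ^ n \<le> exp 1 ^ n * fact n" by (simp add: divide_le_eq mult.commute)
  then show ?thesis by (simp add: power_divide divide_le_eq mult.commute)
qed

lemma e_le: 
  assumes "n \<ge> 1"
  shows "exp 1 * real n ^ (n + 1) \<le> real (n + 1) ^ (n + 1)"
proof -
  have n0: "real n > 0" using assms by simp
  have "ln (real n / real (n+1)) \<le> real n / real (n+1) - 1"
    by (rule ln_le_minus_one) (use n0 in simp)
  also have "\<dots> = - 1 / real (n+1)" by (simp add: field_simps)
  finally have l: "ln (real n / real (n+1)) \<le> - 1 / real (n+1)" .
  have "ln (real (n+1) / real n) = - ln (real n / real (n+1))"
    using n0 by (simp add: ln_div)
  with l have "1 / real (n+1) \<le> ln (real (n+1) / real n)" by simp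
  then have "1 \<le> real (n+1) * ln (real (n+1) / real n)"
    by (simp add: field_simps)
  then have "exp 1 \<le> exp (real (n+1) * ln (real (n+1) / real n))" by simp
  also have "\<dots> = exp (ln (real (n+1) / real n)) ^ (n+1)" by (rule exp_of_nat_mult)
  also have "\<dots> = (real (n+1) / real n) ^ (n+1)" using n0 by simp
  finally have "exp 1 \<le> (real (n+1) / real n) ^ (n+1)" .
  then have "exp 1 * real n ^ (n+1) \<le> (real (n+1) / real n) ^ (n+1) * real n ^ (n+1)"
    by (rule mult_right_mono) simp
  also have "\<dots> = real (n+1) ^ (n+1)"
    using n0 by (simp add: power_divide)
  finally show ?thesis .
qed

lemma fact_upper:
  assumes "n \<ge> 1"
  shows "exp 1 ^ n * fact n \<le> exp 1 * real n ^ (n + 1)"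
  using assms
proof (induction n rule: nat_induct_at_least)
  case base then show ?case by simp
next
  case (Suc n)
  have "exp 1 ^ Suc n * fact (Suc n) = exp 1 * real (Suc n) * (exp 1 ^ n * fact n)"
    by (simp add: algebra_simps)
  also have "\<dots> \<le> exp 1 * real (Suc n) * (exp 1 * real n ^ (n + 1))"
    using Suc by (intro mult_left_mono) auto
  also have "\<dots> \<le> exp 1 * real (Suc n) * real (n + 1) ^ (n + 1)"
    using e_le[OF Suc(1)] by (intro mult_left_mono) auto
  also have "\<dots> = exp 1 * real (Suc n) ^ (Suc n + 1)" by simp
  finally show ?case .
qed

lemma poch_fact: "fact k * pochhammer (Suc k) m = (fact (k + m) :: nat)"
proof (induction m)
  case 0 then show ?case by simp
next
  case (Suc m)
  have "fact k * pochhammer (Suc k) (Suc m) = fact k * pochhammer (Suc k) m * (Suc k + m)"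
    by (simp only: pochhammer_Suc of_nat_id mult.assoc)
  also have "\<dots> = fact (k + m) * (Suc k + m)" using Suc.IH by simp
  also have "\<dots> = fact (k + Suc m)" by (simp add: mult.commute)
  finally show ?case .
qed

lemma poch_mono: "pochhammer k m \<le> (pochhammer (Suc k) m :: nat)"
proof (induction m)
  case 0 then show ?case by simp
next
  case (Suc m) then show ?case by (simp only: pochhammer_Suc of_nat_id) (rule mult_le_mono, auto)
qed

lemma term_bound:
  assumes "k \<le> n"
  shows "real ((n choose k) * pochhammer k (n - k)) \<le> fact n * exp (2 * sqrt (real n))"
proof -
  have c: "(n choose k) * fact k \<le> n ^ k"
  proof -
    have "fact k * fact (n - k) * (n choose k) = fact n" using binomial_fact_lemma[OF assms] .
    then have "fact n div fact (n - k) = (n choose k) * fact k"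
      by (metis fact_nonzero mult.commute nonzero_mult_div_cancel_left mult.assoc)
    then show ?thesis using fact_div_fact_le_pow[OF assms] by simp
  qed
  have p: "pochhammer k (n - k) * fact k \<le> (fact n :: nat)"
  proof -
    have "pochhammer k (n - k) * fact k \<le> pochhammer (Suc k) (n - k) * fact k"
      using poch_mono by (simp add: mult_le_mono)
    also have "\<dots> = fact n" using poch_fact[of k "n - k"] assms by (simp add: mult.commute)
    finally show ?thesis .
  qed
  have c': "real ((n choose k) * fact k) \<le> real (n ^ k)" using c by (simp only: of_nat_le_iff)
  have p': "real (pochhammer k (n - k) * fact k) \<le> fact n" using p by (metis of_nat_fact of_nat_le_iff)
  have "real ((n choose k) * fact k) * real (pochhammer k (n - k) * fact k) \<le> real (n ^ k) * fact n"
    by (rule mult_mono[OF c' p']) auto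
  then have "real ((n choose k) * pochhammer k (n - k)) * (fact k * fact k) \<le> real n ^ k * fact n"
    by (simp add: algebra_simps)
  then have A: "real ((n choose k) * pochhammer k (n - k)) \<le> fact n * (real n ^ k / (fact k * fact k))"
    by (simp add: field_simps)
  have "real n ^ k / (fact k * fact k) = (sqrt (real n) ^ k / fact k) ^ 2"
    by (simp add: power2_eq_square power_mult_distrib[symmetric] real_sqrt_pow2 power_divide
        flip: power_mult)
  also have "\<dots> \<le> exp (sqrt (real n)) ^ 2"
    by (intro power_mono exp_term) auto
  also have "\<dots> = exp (2 * sqrt (real n))" by (simp add: power2_eq_square flip: exp_add)
  finally have "real n ^ k / (fact k * fact k) \<le> exp (2 * sqrt (real n))" .
  with A show ?thesis by (meson fact_ge_zero mult_left_mono order_trans)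
qed

lemma fF_upper: "real (fF n) \<le> real (n + 1) * fact n * exp (2 * sqrt (real n))"
proof -
  have "real (fF n) = (\<Sum>k=0..n. real ((n choose k) * pochhammer k (n - k)))"
    unfolding fF_def by (simp only: of_nat_sum)
  also have "\<dots> \<le> (\<Sum>k=0..n. fact n * exp (2 * sqrt (real n)))"
    by (intro sum_mono term_bound) auto
  also have "\<dots> = real (n + 1) * fact n * exp (2 * sqrt (real n))" by simp
  finally show ?thesis .
qed

lemma fF_lower:
  assumes "n \<ge> 1"
  shows "fact n \<le> fF n"
proof -
  have "(n choose 1) * pochhammer 1 (n - 1) \<le> fF n"
    unfolding fF_def by (rule member_le_sum) (use assms in auto)
  moreover have "(n choose 1) * pochhammer 1 (n - 1) = fact n"
    using assms pochhammer_fact[of "n - 1", where 'a=nat] by (cases n) auto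
  ultimately show ?thesis by simp
qed

lemma fF_limit: "(\<lambda>n. root n (real (fF n)) / real n) \<longlonglongrightarrow> exp (-1)"
proof (rule tendsto_sandwich[where f = "\<lambda>_. exp (-1)"
      and h = "\<lambda>n. (exp 1 * real n * (real n + 1) * exp (2 * sqrt (real n))) powr (1 / real n) * exp (-1)"])
  show "\<forall>\<^sub>F n in sequentially. exp (-1) \<le> root n (real (fF n)) / real n"
  proof (rule eventually_sequentiallyI[of 1])
    fix n :: nat assume n: "n \<ge> 1"
    then have n0: "0 < n" by simp
    have "(real n / exp 1) ^ n \<le> real (fF n)"
    proof -
      have "(fact n :: real) \<le> real (fF n)" using fF_lower[OF n] by (metis of_nat_fact of_nat_le_iff)
      then show ?thesis using fact_lower[of n] by linarith
    qed
    then have "root n ((real n / exp 1) ^ n) \<le> root n (real (fF n))"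
      using n0 by (rule real_root_le_mono[rotated])
    then have "real n / exp 1 \<le> root n (real (fF n))"
      using n0 by (simp add: real_root_power_cancel)
    then show "exp (-1) \<le> root n (real (fF n)) / real n"
      using n0 by (simp add: field_simps exp_minus)
  qed
  show "\<forall>\<^sub>F n in sequentially. root n (real (fF n)) / real n
      \<le> (exp 1 * real n * (real n + 1) * exp (2 * sqrt (real n))) powr (1 / real n) * exp (-1)"
  proof (rule eventually_sequentiallyI[of 1])
    fix n :: nat assume n: "n \<ge> 1"
    then have n0: "0 < n" by simp
    define C where "C = exp 1 * real n * (real n + 1) * exp (2 * sqrt (real n))"
    have C0: "C \<ge> 0" unfolding C_def by simp
    have fu: "exp 1 ^ n * fact n \<le> exp 1 * real n ^ (n + 1)" using fact_upper[OF n] .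
    have "fact n \<le> exp 1 * real n * (real n / exp 1) ^ n"
    proof -
      have "fact n \<le> exp 1 * real n ^ (n + 1) / exp 1 ^ n"
        using fu by (simp add: field_simps)
      also have "\<dots> = exp 1 * real n * (real n / exp 1) ^ n"
        by (simp add: power_divide)
      finally show ?thesis .
    qed
    then have "real (fF n) \<le> real (n + 1) * (exp 1 * real n * (real n / exp 1) ^ n) * exp (2 * sqrt (real n))"
      using fF_upper[of n] by (smt (verit) exp_gt_zero mult_right_mono of_nat_0_le_iff mult_left_mono)
    also have "\<dots> = C * (real n / exp 1) ^ n" unfolding C_def by (simp add: algebra_simps)
    finally have "root n (real (fF n)) \<le> root n (C * (real n / exp 1) ^ n)"
      using n0 by (rule real_root_le_mono[rotated])
    also have "\<dots> = root n C * (real n / exp 1)"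
      using n0 by (simp add: real_root_mult real_root_power_cancel)
    also have "root n C = C powr (1 / real n)" using n0 C0 by (simp add: root_powr_inverse)
    finally have "root n (real (fF n)) \<le> C powr (1 / real n) * (real n / exp 1)" .
    then show "root n (real (fF n)) / real n \<le> C powr (1 / real n) * exp (-1)"
      using n0 by (simp add: field_simps exp_minus)
  qed
  show "(\<lambda>_. exp (-1)) \<longlonglongrightarrow> exp (-1::real)" by simp
  have "(\<lambda>n::nat. (exp 1 * real n * (real n + 1) * exp (2 * sqrt (real n))) powr (1 / real n)) \<longlonglongrightarrow> 1"
    by real_asymp
  then show "(\<lambda>n. (exp 1 * real n * (real n + 1) * exp (2 * sqrt (real n))) powr (1 / real n) * exp (-1))
      \<longlonglongrightarrow> exp (-1)"
    using tendsto_mult_right[of _ 1 sequentially "exp (-1::real)"] by simp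
qed


theorem proposition5p14:
  defines "S \<equiv> {[1,3,2], [2,3,1], [3,2,1]} :: nat list set"
  shows "(\<forall>n\<ge>1. num_trees S n = fact n)
    \<and> Abs_fps (\<lambda>n. real (num_trees S n) / fact n) = fps_X / (1 - fps_X)
    \<and> Abs_fps (\<lambda>n. real (num_forests S n) / fact n)
        = fps_compose (fps_exp 1) (fps_X / (1 - fps_X))
    \<and> (\<lambda>n. root n (real (num_forests S n)) / real n) \<longlonglongrightarrow> exp (-1)"
proof -
  have t: "num_trees S n = (if n = 0 then 0 else fact n)" for n
    unfolding S_def by (rule num_trees_eq)
  have f: "num_forests S n = fF n" for n
    unfolding S_def fF_def by (rule num_forests_eq)
  have c1: "\<forall>n\<ge>1. num_trees S n = fact n" using t by simp
  have "(\<lambda>n. real (num_trees S n) / fact n) = (\<lambda>n. if n = 0 then 0 else 1)"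
    using t by (auto simp: fun_eq_iff)
  then have c2: "Abs_fps (\<lambda>n. real (num_trees S n) / fact n) = fps_X / (1 - fps_X)"
    using fps_trees by simp
  have c3: "Abs_fps (\<lambda>n. real (num_forests S n) / fact n)
        = fps_compose (fps_exp 1) (fps_X / (1 - fps_X))"
    using fps_forests unfolding f fF_def .
  have c4: "(\<lambda>n. root n (real (num_forests S n)) / real n) \<longlonglongrightarrow> exp (-1)"
    unfolding f by (rule fF_limit)
  show ?thesis using c1 c2 c3 c4 by blast
qed

end
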